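(* Let $\{\mathbf{W}(t)\}_{t \geq 0}$ be i.i.d. random $n \times n$ row-stochastic matrices with mean $\overline{\mathbf{W}} = \mathbb{E}\{\mathbf{W}(t)\}$, each of the block form $$\mathbf{W}(t) = \begin{pmatrix} \mathbf{I}_{n_s} & \mathbf{0} \\ \mathbf{B}(t) & \mathbf{D}(t) \end{pmatrix},$$ with $1 \le n_s < n$, and correspondingly $\overline{\mathbf{W}} = \begin{pmatrix} \mathbf{I}_{n_s} & \mathbf{0} \\ \overline{\mathbf{B}} & \overline{\mathbf{D}} \end{pmatrix}$. Assume $\|\overline{\mathbf{D}}\|_2 < 1$ and $\mathbb{E}\{\|\mathbf{D}(t)\|_2\} = \|\overline{\mathbf{D}}\|_2$. For $t \geq s$ let $\boldsymbol{\Phi}(s,t) = \mathbf{W}(t)\mathbf{W}(t-1)\cdots\mathbf{W}(s)$. Then $\mathbf{D}(t)\mathbf{D}(t-1)\cdots\mathbf{D}(s) \to \mathbf{0}$ almost surely as $t - s \to \infty$, so that $\boldsymbol{\Phi}(s,t)$ converges almost surely to $$\begin{pmatrix} \mathbf{I} & \mathbf{0} \\ \mathbf{B}(s,t) & \mathbf{0} \end{pmatrix} \quad\text{as } |t-s|\to\infty$$ (in the sense that the difference tends to zero), where $\mathbf{B}(s,t) = \sum_{q=s}^{t} \big(\mathbf{D}(t)\cdots\mathbf{D}(q+1)\big)\mathbf{B}(q)$ (the empty product for $q=t$ being the identity) is bounded almost surely.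
   Context: This models opinion dynamics $\mathbf{x}(t+1) = \mathbf{W}(t)\mathbf{x}(t)$ in which the first $n_s$ agents are stubborn (never change opinion). $\|\cdot\|_2$ is the spectral norm. *)

theory Defs
  imports "HOL-Probability.Probability"
begin

text \<open>Agents are indexed by the sum type 's + 'f: the Inl-indices are the n_s stubborn
agents (n_s = CARD('s) \<ge> 1), the Inr-indices the remaining n - n_s \<ge> 1 agents.\<close>

definition blockmat ::
  "real^'s::finite^'s \<Rightarrow> real^'f::finite^'s \<Rightarrow> real^'s^'f \<Rightarrow> real^'f^'f \<Rightarrow> real^('s+'f)^('s+'f)" where
  "blockmat A11 A12 A21 A22 = (\<chi> i j. case i of
      Inl a \<Rightarrow> (case j of Inl b \<Rightarrow> A11 $ a $ b | Inr b \<Rightarrow> A12 $ a $ b)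
    | Inr a \<Rightarrow> (case j of Inl b \<Rightarrow> A21 $ a $ b | Inr b \<Rightarrow> A22 $ a $ b))"

definition blkB :: "real^('s::finite+'f::finite)^('s+'f) \<Rightarrow> real^'s^'f" where
  "blkB A = (\<chi> i j. A $ Inr i $ Inl j)"

definition blkD :: "real^('s::finite+'f::finite)^('s+'f) \<Rightarrow> real^'f^'f" where
  "blkD A = (\<chi> i j. A $ Inr i $ Inr j)"

definition row_stochastic :: "real^'n^'n \<Rightarrow> bool" where
  "row_stochastic A \<longleftrightarrow> (\<forall>i j. 0 \<le> A $ i $ j) \<and> (\<forall>i. (\<Sum>j\<in>UNIV. A $ i $ j) = 1)"

definition spectral_norm :: "real^'n^'m \<Rightarrow> real" where
  "spectral_norm A = onorm (\<lambda>x. A *v x)"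

text \<open>lprod A s t = A t ** A (t-1) ** ... ** A s for s \<le> t; the identity (empty product) for t < s.\<close>
primrec lprod :: "(nat \<Rightarrow> real^'n^'n) \<Rightarrow> nat \<Rightarrow> nat \<Rightarrow> real^'n^'n" where
  "lprod A s 0 = (if s = 0 then A 0 else mat 1)"
| "lprod A s (Suc t) = (if s \<le> Suc t then A (Suc t) ** lprod A s t else mat 1)"

definition accB :: "(nat \<Rightarrow> real^'s^'f) \<Rightarrow> (nat \<Rightarrow> real^'f^'f) \<Rightarrow> nat \<Rightarrow> nat \<Rightarrow> real^'s^'f" where
  "accB Bf Df s t = (\<Sum>q\<in>{s..t}. lprod Df (q+1) t ** Bf q)"

end

theory Submission imports Defs begin

lemma lprod_lt: "t < s \<Longrightarrow> lprod A s t = mat 1"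
  by (induction t) auto

lemma lprod_Suc: "s \<le> Suc t \<Longrightarrow> lprod A s (Suc t) = A (Suc t) ** lprod A s t"
  by simp

lemma lprod_same: "lprod A s s = A s"
  by (cases s) (auto simp: lprod_lt)

lemma sum_Plus_UNIV: "(\<Sum>k\<in>(UNIV::('a::finite+'b::finite) set). g k) = (\<Sum>k\<in>UNIV. g (Inl k)) + (\<Sum>k\<in>UNIV. g (Inr k))"
  using sum.Plus[of "UNIV::'a set" "UNIV::'b set" g] by (simp add: comp_def)

lemma sum_delta_r[simp]: "(\<Sum>k\<in>(UNIV::'a::finite set). (f k::real) * (if k = a then 1 else 0)) = f a"
  by (simp add: if_distrib[where f="\<lambda>x. _ * x"] cong: if_cong)
lemma sum_delta_l[simp]: "(\<Sum>k\<in>(UNIV::'a::finite set). (if a = k then 1 else 0) * (f k::real)) = f a"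
  by (simp add: if_distrib[where f="\<lambda>x. x * _"] cong: if_cong)

lemma block_mult:
  fixes B1 B2 :: "real^'s::finite^'f::finite" and D1 D2 :: "real^'f^'f"
  shows "blockmat (mat 1) 0 B1 D1 ** blockmat (mat 1) 0 B2 D2 = blockmat (mat 1) 0 (B1 + D1 ** B2) (D1 ** D2)"
  unfolding vec_eq_iff
proof (intro allI)
  fix i j :: "'s+'f"
  show "(blockmat (mat 1) 0 B1 D1 ** blockmat (mat 1) 0 B2 D2) $ i $ j = blockmat (mat 1) 0 (B1 + D1 ** B2) (D1 ** D2) $ i $ j"
    by (cases i; cases j) (simp_all add: blockmat_def matrix_matrix_mult_def sum_Plus_UNIV mat_def if_distrib[where f="\<lambda>x. x * _"] sum.delta cong: if_cong)
qed

lemma matrix_mul_sum_left: "finite S \<Longrightarrow> (\<Sum>q\<in>S. (D::real^'n::finite^'m::finite) ** X q) = D ** (\<Sum>q\<in>S. X q)"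
  by (induction S rule: finite_induct) (auto simp: matrix_add_ldistrib)

lemma accB_Suc:
  assumes "s \<le> n"
  shows "accB Bf Df s (Suc n) = Bf (Suc n) + Df (Suc n) ** accB Bf Df s n"
proof -
  have "accB Bf Df s (Suc n) = lprod Df (Suc n + 1) (Suc n) ** Bf (Suc n) + (\<Sum>q\<in>{s..n}. lprod Df (q+1) (Suc n) ** Bf q)"
    unfolding accB_def using assms by (simp add: atLeastAtMostSuc_conv add.commute)
  also have "(\<Sum>q\<in>{s..n}. lprod Df (q+1) (Suc n) ** Bf q) = (\<Sum>q\<in>{s..n}. Df (Suc n) ** (lprod Df (q+1) n ** Bf q))"
    by (intro sum.cong) (auto simp: matrix_mul_assoc)
  also have "\<dots> = Df (Suc n) ** accB Bf Df s n"
    unfolding accB_def by (simp add: matrix_mul_sum_left)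
  finally show ?thesis by (simp add: lprod_lt)
qed

lemma lprod_block:
  fixes A :: "nat \<Rightarrow> real^('s::finite+'f::finite)^('s+'f)"
  assumes blk: "\<And>q. A q = blockmat (mat 1) 0 (blkB (A q)) (blkD (A q))"
    and "s \<le> t"
  shows "lprod A s t = blockmat (mat 1) 0 (accB (\<lambda>q. blkB (A q)) (\<lambda>q. blkD (A q)) s t) (lprod (\<lambda>q. blkD (A q)) s t)"
  using \<open>s \<le> t\<close>
proof (induction t rule: nat_induct_at_least)
  case base
  then show ?case
    by (subst blk) (simp add: lprod_same accB_def lprod_lt)
next
  case (Suc n)
  have "lprod A s (Suc n) = A (Suc n) ** lprod A s n" using Suc by simp
  also have "\<dots> = blockmat (mat 1) 0 (blkB (A (Suc n))) (blkD (A (Suc n))) ** lprod A s n"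
    by (subst blk) simp
  also note Suc.IH
  finally show ?case using Suc by (simp add: block_mult accB_Suc)
qed

lemma row_stochastic_mult: "row_stochastic A \<Longrightarrow> row_stochastic B \<Longrightarrow> row_stochastic (A ** B)"
  unfolding row_stochastic_def matrix_matrix_mult_def
  by (auto intro!: sum_nonneg simp: sum.swap[where A=UNIV] sum_distrib_left[symmetric])

lemma row_stochastic_lprod: assumes "\<And>q. row_stochastic (A q)" "s \<le> t" shows "row_stochastic (lprod A s t)"
  using assms(2)
proof (induction t rule: nat_induct_at_least)
  case base then show ?case by (simp add: lprod_same assms(1))
next
  case (Suc n) then show ?case by (simp add: row_stochastic_mult assms(1))
qed

lemma row_stochastic_le1: "row_stochastic A \<Longrightarrow> A $ i $ j \<le> 1"
  unfolding row_stochastic_def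
  by (metis finite member_le_sum UNIV_I)

lemma norm_le_entries: "norm (X::real^'n::finite^'m::finite) \<le> (\<Sum>i\<in>UNIV. \<Sum>j\<in>UNIV. \<bar>X$i$j\<bar>)"
proof -
  have "norm X \<le> (\<Sum>i\<in>UNIV. \<bar>norm (X$i)\<bar>)"
    unfolding norm_vec_def by (rule order_trans[OF L2_set_le_sum]) auto
  also have "\<dots> \<le> (\<Sum>i\<in>UNIV. \<Sum>j\<in>UNIV. \<bar>X$i$j\<bar>)"
    by (intro sum_mono) (simp add: norm_le_l1_cart)
  finally show ?thesis .
qed

lemma entry_le_onorm: "\<bar>(A::real^'n::finite^'m::finite) $ i $ j\<bar> \<le> spectral_norm A"
  unfolding spectral_norm_def
  using component_le_onorm[of "\<lambda>x. A *v x" i j] by (simp add: matrix_vector_mul_linear)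

lemma spectral_norm_nonneg: "0 \<le> spectral_norm (A::real^'n::finite^'m::finite)"
  unfolding spectral_norm_def by (rule onorm_pos_le) simp

lemma spectral_norm_mult: "spectral_norm ((A::real^'n::finite^'n) ** B) \<le> spectral_norm A * spectral_norm B"
proof -
  have "(\<lambda>x. (A ** B) *v x) = (\<lambda>x. A *v x) o (\<lambda>x. B *v x)"
    by (auto simp: matrix_vector_mul_assoc)
  then show ?thesis unfolding spectral_norm_def
    by (simp add: onorm_compose)
qed

lemma spectral_norm_lprod:
  assumes "s \<le> t"
  shows "spectral_norm (lprod (A::nat \<Rightarrow> real^'n::finite^'n) s t) \<le> (\<Prod>r\<in>{s..t}. spectral_norm (A r))"
  using assms
proof (induction t rule: nat_induct_at_least)
  case base then show ?case by (simp add: lprod_same)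
next
  case (Suc n)
  have "spectral_norm (lprod A s (Suc n)) \<le> spectral_norm (A (Suc n)) * spectral_norm (lprod A s n)"
    using Suc by (simp add: spectral_norm_mult)
  also have "\<dots> \<le> spectral_norm (A (Suc n)) * (\<Prod>r\<in>{s..n}. spectral_norm (A r))"
    by (intro mult_left_mono Suc.IH spectral_norm_nonneg)
  finally show ?case using Suc by (simp add: mult.commute)
qed

lemma spectral_norm_le_entries: "spectral_norm (A::real^'n::finite^'m::finite) \<le> (\<Sum>i\<in>UNIV. \<Sum>j\<in>UNIV. \<bar>A $ i $ j\<bar>)"
  unfolding spectral_norm_def by (rule onorm_le_matrix_component_sum)

lemma spectral_norm_triangle: "spectral_norm (A::real^'n::finite^'m::finite) \<le> spectral_norm (A - B) + spectral_norm B"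
proof -
  have "(\<lambda>x. A *v x) = (\<lambda>x. (A - B) *v x + B *v x)"
    by (auto simp: matrix_vector_mult_diff_rdistrib)
  then show ?thesis unfolding spectral_norm_def
    by (metis onorm_triangle matrix_vector_mul_bounded_linear)
qed

lemma blkD_diff: "blkD A - blkD B = blkD (A - B)"
  by (simp add: blkD_def vec_eq_iff)

lemma spectral_blkD_lipschitz:
  "(real CARD('f) * real CARD('f))-lipschitz_on UNIV (\<lambda>A::real^('s::finite+'f::finite)^('s+'f). spectral_norm (blkD A))"
proof (rule lipschitz_onI)
  fix A B :: "real^('s+'f)^('s+'f)"
  have key: "spectral_norm (blkD A) - spectral_norm (blkD B) \<le> real CARD('f) * real CARD('f) * dist A B"
    if "True" for A B :: "real^('s+'f)^('s+'f)"
  proof -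
    have "spectral_norm (blkD A) - spectral_norm (blkD B) \<le> spectral_norm (blkD (A - B))"
      using spectral_norm_triangle[of "blkD A" "blkD B"] by (simp add: blkD_diff)
    also have "\<dots> \<le> (\<Sum>i\<in>(UNIV::'f set). \<Sum>j\<in>(UNIV::'f set). \<bar>blkD (A - B) $ i $ j\<bar>)"
      by (rule spectral_norm_le_entries)
    also have "\<dots> \<le> (\<Sum>i\<in>(UNIV::'f set). \<Sum>j\<in>(UNIV::'f set). dist A B)"
    proof (intro sum_mono)
      fix i j :: 'f
      have "\<bar>(A - B) $ Inr i $ Inr j\<bar> \<le> norm ((A - B) $ Inr i)"
        by (rule component_le_norm_cart)
      also have "\<dots> \<le> norm (A - B)" by (rule Finite_Cartesian_Product.norm_nth_le)
      finally show "\<bar>blkD (A - B) $ i $ j\<bar> \<le> dist A B"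
        by (simp add: blkD_def dist_norm)
    qed
    finally show ?thesis by simp
  qed
  show "dist (spectral_norm (blkD A)) (spectral_norm (blkD B)) \<le> real CARD('f) * real CARD('f) * dist A B"
    using key[of A B] key[of B A] by (simp add: dist_real_def dist_commute abs_le_iff)
qed simp

lemma spectral_blkD_measurable:
  "(\<lambda>A::real^('s::finite+'f::finite)^('s+'f). spectral_norm (blkD A)) \<in> borel_measurable borel"
  by (rule borel_measurable_continuous_onI, rule lipschitz_on_continuous_on, rule spectral_blkD_lipschitz)

lemma blockmat_diff: "blockmat (mat 1) 0 X P - blockmat (mat 1) 0 X 0 = blockmat 0 0 0 P"
  unfolding vec_eq_iff by (auto simp: blockmat_def split: sum.split)

lemma blockmat_tendsto:
  assumes "(P \<longlongrightarrow> 0) F"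
  shows "((\<lambda>t. blockmat 0 0 0 (P t)) \<longlongrightarrow> 0) F"
proof (rule vec_tendstoI, rule vec_tendstoI)
  fix i j
  show "((\<lambda>x. blockmat 0 0 0 (P x) $ i $ j) \<longlongrightarrow> 0 $ i $ j) F"
  proof (cases i; cases j)
    fix a b assume "i = Inr a" "j = Inr b"
    then show ?thesis using tendsto_vec_nth[OF tendsto_vec_nth[OF assms, of a], of b]
      by (simp add: blockmat_def)
  qed (simp_all add: blockmat_def)
qed

lemma lprod_tendsto:
  fixes D :: "nat \<Rightarrow> real^'n::finite^'n"
  assumes "(\<lambda>k. \<Prod>r\<in>{s..k+s}. spectral_norm (D r)) \<longlonglongrightarrow> 0"
  shows "(\<lambda>t. lprod D s t) \<longlonglongrightarrow> 0"
proof (rule LIMSEQ_offset[where k=s], rule vec_tendstoI, rule vec_tendstoI)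
  fix i j
  show "(\<lambda>n. lprod D s (n + s) $ i $ j) \<longlonglongrightarrow> 0 $ i $ j"
  proof (simp, rule Lim_null_comparison[OF _ assms])
    show "\<forall>\<^sub>F k in sequentially. norm (lprod D s (k + s) $ i $ j) \<le> (\<Prod>r\<in>{s..k+s}. spectral_norm (D r))"
    proof (rule always_eventually, rule allI)
      fix k
      have "norm (lprod D s (k + s) $ i $ j) \<le> spectral_norm (lprod D s (k + s))"
        using entry_le_onorm by simp
      also have "\<dots> \<le> (\<Prod>r\<in>{s..k+s}. spectral_norm (D r))"
        by (rule spectral_norm_lprod) simp
      finally show "norm (lprod D s (k + s) $ i $ j) \<le> (\<Prod>r\<in>{s..k+s}. spectral_norm (D r))" .
    qed
  qed
qed

lemma ennreal_sum_fin_tendsto: "(\<And>k. 0 \<le> f k) \<Longrightarrow> (\<Sum>k. ennreal (f k)) \<noteq> \<top> \<Longrightarrow> f \<longlonglongrightarrow> 0"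
  using summable_suminf_not_top summable_LIMSEQ_zero by blast

theorem lemma2:
  fixes M :: "'w measure"
    and W :: "nat \<Rightarrow> 'w \<Rightarrow> real^('s::finite+'f::finite)^('s+'f)"
  assumes "prob_space M"
    and indep: "prob_space.indep_vars M (\<lambda>_. borel) W UNIV"
    and ident: "\<And>t. distr M borel (W t) = distr M borel (W 0)"
    and stoch: "\<And>t \<omega>. \<omega> \<in> space M \<Longrightarrow> row_stochastic (W t \<omega>)"
    and block: "\<And>t \<omega>. \<omega> \<in> space M \<Longrightarrow>
                  W t \<omega> = blockmat (mat 1) 0 (blkB (W t \<omega>)) (blkD (W t \<omega>))"
    and Dbar_lt: "spectral_norm (blkD (integral\<^sup>L M (W 0))) < 1"
    and E_norm: "\<And>t. integral\<^sup>L M (\<lambda>\<omega>. spectral_norm (blkD (W t \<omega>)))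
                       = spectral_norm (blkD (integral\<^sup>L M (W 0)))"
  shows "(AE \<omega> in M. \<forall>s. (\<lambda>t. lprod (\<lambda>q. blkD (W q \<omega>)) s t) \<longlonglongrightarrow> 0)
       \<and> (AE \<omega> in M. \<forall>s. (\<lambda>t. lprod (\<lambda>q. W q \<omega>) s t
              - blockmat (mat 1) 0 (accB (\<lambda>q. blkB (W q \<omega>)) (\<lambda>q. blkD (W q \<omega>)) s t) 0)
            \<longlonglongrightarrow> 0)
       \<and> (AE \<omega> in M. \<forall>s. \<exists>C. \<forall>t\<ge>s.
              norm (accB (\<lambda>q. blkB (W q \<omega>)) (\<lambda>q. blkD (W q \<omega>)) s t) \<le> C)"
proof -
  interpret P: prob_space M by fact
  define a where "a r \<omega> = spectral_norm (blkD (W r \<omega>))" for r \<omega>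
  define \<rho> where "\<rho> = spectral_norm (blkD (integral\<^sup>L M (W 0)))"
  define K where "K = real CARD('f) * real CARD('f)"
  have rvW[measurable]: "W t \<in> borel_measurable M" for t
    using indep unfolding P.indep_vars_def by auto
  have meas_a[measurable]: "a r \<in> borel_measurable M" for r
    unfolding a_def using measurable_compose[OF rvW spectral_blkD_measurable] by simp
  have ind_a: "P.indep_vars (\<lambda>_. borel) a UNIV"
    unfolding a_def
    using P.indep_vars_compose2[OF indep, of "\<lambda>_ A. spectral_norm (blkD A)" "\<lambda>_. borel"]
      spectral_blkD_measurable by simp
  have a_nn: "0 \<le> a r \<omega>" for r \<omega>
    unfolding a_def by (rule spectral_norm_nonneg)
  have a_bd: "a r \<omega> \<le> K" if "\<omega> \<in> space M" for r \<omega>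
  proof -
    have "a r \<omega> \<le> (\<Sum>i\<in>(UNIV::'f set). \<Sum>j\<in>(UNIV::'f set). \<bar>blkD (W r \<omega>) $ i $ j\<bar>)"
      unfolding a_def by (rule spectral_norm_le_entries)
    also have "\<dots> \<le> (\<Sum>i\<in>(UNIV::'f set). \<Sum>j\<in>(UNIV::'f set). 1)"
    proof (intro sum_mono)
      fix i j :: 'f
      have rs: "row_stochastic (W r \<omega>)" using stoch that by blast
      then show "\<bar>blkD (W r \<omega>) $ i $ j\<bar> \<le> 1"
        using row_stochastic_le1[OF rs] unfolding row_stochastic_def blkD_def by simp
    qed
    finally show ?thesis by (simp add: K_def)
  qed
  have int_a: "integrable M (a r)" for r
    by (rule P.integrable_const_bound[where B=K]) (auto intro!: AE_I2 simp: a_nn a_bd)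
  have Ea: "integral\<^sup>L M (a r) = \<rho>" for r
    using E_norm[of r] unfolding a_def \<rho>_def by simp
  have rho_nn: "0 \<le> \<rho>" unfolding \<rho>_def by (rule spectral_norm_nonneg)
  have rho_lt: "\<rho> < 1" unfolding \<rho>_def by (rule Dbar_lt)
  define Pk where "Pk s k \<omega> = (\<Prod>r\<in>{s..k+s}. a r \<omega>)" for s k \<omega>
  have meas_P[measurable]: "Pk s k \<in> borel_measurable M" for s k
    unfolding Pk_def by measurable
  have Pk_nn: "0 \<le> Pk s k \<omega>" for s k \<omega>
    unfolding Pk_def by (intro prod_nonneg) (simp add: a_nn)
  have ind_sub: "P.indep_vars (\<lambda>_. borel) a {s..k+s}" for s k
    using P.indep_vars_subset[OF ind_a] by simp
  have EP: "integral\<^sup>L M (Pk s k) = \<rho>^(k+1)" for s k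
  proof -
    have "integral\<^sup>L M (Pk s k) = (\<Prod>r\<in>{s..k+s}. integral\<^sup>L M (a r))"
      unfolding Pk_def by (rule P.indep_vars_lebesgue_integral[OF _ ind_sub]) (auto simp: int_a)
    also have "\<dots> = \<rho>^(k+1)" by (simp add: Ea)
    finally show ?thesis .
  qed
  have intP: "integrable M (Pk s k)" for s k
    unfolding Pk_def by (rule P.indep_vars_integrable[OF _ ind_sub]) (auto simp: int_a)
  have nnP: "(\<integral>\<^sup>+\<omega>. ennreal (Pk s k \<omega>) \<partial>M) = ennreal (\<rho>^(k+1))" for s k
    using nn_integral_eq_integral[OF intP] Pk_nn EP by simp
  have summ: "summable (\<lambda>k. \<rho>^(k+1))"
    using summable_mult[OF summable_geometric[of \<rho>], of \<rho>] rho_nn rho_lt by simp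
  have fin: "AE \<omega> in M. (\<Sum>k. ennreal (Pk s k \<omega>)) \<noteq> \<infinity>" for s
  proof (rule nn_integral_noteq_infinite)
    show "(\<lambda>\<omega>. \<Sum>k. ennreal (Pk s k \<omega>)) \<in> borel_measurable M" by measurable
    have "(\<integral>\<^sup>+\<omega>. (\<Sum>k. ennreal (Pk s k \<omega>)) \<partial>M) = (\<Sum>k. ennreal (\<rho>^(k+1)))"
      by (subst nn_integral_suminf) (auto simp: nnP)
    also have "\<dots> = ennreal (\<Sum>k. \<rho>^(k+1))"
      by (rule suminf_ennreal2[OF _ summ]) (simp add: rho_nn)
    finally show "(\<integral>\<^sup>+\<omega>. (\<Sum>k. ennreal (Pk s k \<omega>)) \<partial>M) \<noteq> \<infinity>" by simp
  qed
  have part1: "AE \<omega> in M. \<forall>s. (\<lambda>t. lprod (\<lambda>q. blkD (W q \<omega>)) s t) \<longlonglongrightarrow> 0"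
    unfolding AE_all_countable
  proof
    fix s
    show "AE \<omega> in M. (\<lambda>t. lprod (\<lambda>q. blkD (W q \<omega>)) s t) \<longlonglongrightarrow> 0"
      using fin[of s]
    proof eventually_elim
      case (elim \<omega>)
      have "(\<lambda>k. Pk s k \<omega>) \<longlonglongrightarrow> 0"
        by (rule ennreal_sum_fin_tendsto[OF Pk_nn]) (use elim in simp)
      then show ?case
        by (intro lprod_tendsto) (simp add: Pk_def a_def)
    qed
  qed
  have part2: "AE \<omega> in M. \<forall>s. (\<lambda>t. lprod (\<lambda>q. W q \<omega>) s t
              - blockmat (mat 1) 0 (accB (\<lambda>q. blkB (W q \<omega>)) (\<lambda>q. blkD (W q \<omega>)) s t) 0)
            \<longlonglongrightarrow> 0"
    using part1 AE_space
  proof eventually_elim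
    case (elim \<omega>)
    show ?case
    proof
      fix s
      have "(\<lambda>t. blockmat 0 0 0 (lprod (\<lambda>q. blkD (W q \<omega>)) s t)) \<longlonglongrightarrow> 0"
        using elim by (intro blockmat_tendsto) simp
      moreover have "\<forall>\<^sub>F t in sequentially. blockmat 0 0 0 (lprod (\<lambda>q. blkD (W q \<omega>)) s t)
          = lprod (\<lambda>q. W q \<omega>) s t
              - blockmat (mat 1) 0 (accB (\<lambda>q. blkB (W q \<omega>)) (\<lambda>q. blkD (W q \<omega>)) s t) 0"
        unfolding eventually_sequentially
      proof (intro exI allI impI)
        fix t assume "s \<le> t"
        then show "blockmat 0 0 0 (lprod (\<lambda>q. blkD (W q \<omega>)) s t)
          = lprod (\<lambda>q. W q \<omega>) s t
              - blockmat (mat 1) 0 (accB (\<lambda>q. blkB (W q \<omega>)) (\<lambda>q. blkD (W q \<omega>)) s t) 0"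
          using lprod_block[of "\<lambda>q. W q \<omega>" s t] block elim by (simp add: blockmat_diff)
      qed
      ultimately show "(\<lambda>t. lprod (\<lambda>q. W q \<omega>) s t
              - blockmat (mat 1) 0 (accB (\<lambda>q. blkB (W q \<omega>)) (\<lambda>q. blkD (W q \<omega>)) s t) 0)
            \<longlonglongrightarrow> 0"
        by (rule Lim_transform_eventually)
    qed
  qed
  have part3: "AE \<omega> in M. \<forall>s. \<exists>C. \<forall>t\<ge>s.
              norm (accB (\<lambda>q. blkB (W q \<omega>)) (\<lambda>q. blkD (W q \<omega>)) s t) \<le> C"
  proof (rule AE_I2, intro allI exI impI)
    fix \<omega> and s t :: nat assume \<omega>: "\<omega> \<in> space M" and st: "s \<le> t"
    let ?X = "accB (\<lambda>q. blkB (W q \<omega>)) (\<lambda>q. blkD (W q \<omega>)) s t"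
    have rs: "row_stochastic (lprod (\<lambda>q. W q \<omega>) s t)"
      using row_stochastic_lprod[of "\<lambda>q. W q \<omega>" s t] stoch[OF \<omega>] st by blast
    have eq: "lprod (\<lambda>q. W q \<omega>) s t $ Inr i $ Inl j = ?X $ i $ j" for i j
      using lprod_block[of "\<lambda>q. W q \<omega>" s t] block[OF \<omega>] st by (simp add: blockmat_def)
    have "norm ?X \<le> (\<Sum>i\<in>UNIV. \<Sum>j\<in>UNIV. \<bar>?X$i$j\<bar>)" by (rule norm_le_entries)
    also have "\<dots> \<le> (\<Sum>i\<in>(UNIV::'f set). \<Sum>j\<in>(UNIV::'s set). 1)"
    proof (intro sum_mono)
      fix i j
        have "0 \<le> lprod (\<lambda>q. W q \<omega>) s t $ Inr i $ Inl j" using rs unfolding row_stochastic_def by blast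
        then show "\<bar>?X$i$j\<bar> \<le> 1"
          using row_stochastic_le1[OF rs, of "Inr i" "Inl j"] unfolding eq by simp
    qed
    finally show "norm ?X \<le> real CARD('f) * real CARD('s)" by simp
  qed
  show ?thesis using part1 part2 part3 by blast
qed

end
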